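(* Let $d\ge 3$ be an integer, $p\in(0,1]$ with $dp\ge\log^5 d$, and $\delta\in(0,1)$ with $\delta^2dp\ge 12\log^4 d$. For the pruning process on $Q^d_p$ defined in the context, for every $v\in V(Q^d)$ and every $t\in[2,\tau]\cap\mathbb{N}$, \[\mathbb{P}[v\in A_t]\le\exp\left\{-\left(\frac{\delta dp}{2t\log d}\right)^{t-1}\right\}.\]
   Context: $Q^d$ is the $d$-dimensional hypercube (vertex set $\{0,1\}^d$, adjacency = Hamming distance one), and $Q^d_p$ is obtained by retaining each edge of $Q^d$ independently with probability $p$. For a graph $F$ and $S\subseteq V(F)$, $F[S]$ is the induced subgraph. Pruning process: let $\tau=\lfloor\log d\rfloor$ (natural log) and $\delta_t=\frac{t\delta}{\lfloor\log d\rfloor}$ for $t\in\mathbb{N}$. Let $H_1=Q^d_p$ and $A_1=\{v\in V(Q^d): d_{H_1}(v)\notin[(1-\delta_1)dp,(1+\delta_1)dp]\}$. For $t=2,\dots,\tau$, let $H_t=Q^d_p\left[V(Q^d)\setminus\bigcup_{i=1}^{t-1}A_i\right]$ and $A_t=\{v\in V(H_t): d_{H_t}(v)<(1-\delta_t)dp\}$. Finally $H=H_\tau$ and $A=\bigcup_{t=1}^\tau A_t$. *)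

theory Defs
  imports "HOL-Probability.Probability"
begin

text \<open>Vertices of Q^d: subsets of {0..<d} (identified with 0/1-vectors via indicator).\<close>
definition cube_V :: "nat \<Rightarrow> nat set set" where
  "cube_V d = Pow {..<d}"

definition cube_adj :: "nat set \<Rightarrow> nat set \<Rightarrow> bool" where
  "cube_adj u v \<longleftrightarrow> card ((u - v) \<union> (v - u)) = 1"

definition cube_E :: "nat \<Rightarrow> nat set set set" where
  "cube_E d = {{u, v} | u v. u \<in> cube_V d \<and> v \<in> cube_V d \<and> cube_adj u v}"

text \<open>Q^d_p: each edge retained independently with probability p; an outcome
  is the indicator function of the retained edges.\<close>
definition Qdp :: "nat \<Rightarrow> real \<Rightarrow> (nat set set \<Rightarrow> bool) pmf" where
  "Qdp d p = Pi_pmf (cube_E d) False (\<lambda>_. bernoulli_pmf p)"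

definition deg_in :: "nat \<Rightarrow> (nat set set \<Rightarrow> bool) \<Rightarrow> nat set set \<Rightarrow> nat set \<Rightarrow> nat" where
  "deg_in d \<omega> S v = card {u \<in> S \<inter> cube_V d. cube_adj u v \<and> \<omega> {u, v}}"

definition delta_t :: "nat \<Rightarrow> real \<Rightarrow> nat \<Rightarrow> real" where
  "delta_t d \<delta> t = real t * \<delta> / real_of_int \<lfloor>ln (real d)\<rfloor>"

text \<open>prune_step d p \<delta> \<omega> k R is the set A_{k+1}, given R = A_1 \<union> ... \<union> A_k.\<close>
definition prune_step :: "nat \<Rightarrow> real \<Rightarrow> real \<Rightarrow> (nat set set \<Rightarrow> bool) \<Rightarrow> nat \<Rightarrow> nat set set \<Rightarrow> nat set set" where
  "prune_step d p \<delta> \<omega> k R =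
     (if k = 0 then
        {v \<in> cube_V d. real (deg_in d \<omega> (cube_V d) v) \<notin>
             {(1 - delta_t d \<delta> 1) * real d * p .. (1 + delta_t d \<delta> 1) * real d * p}}
      else
        {v \<in> cube_V d - R. real (deg_in d \<omega> (cube_V d - R) v) <
             (1 - delta_t d \<delta> (Suc k)) * real d * p})"

text \<open>prune_removed k = A_1 \<union> ... \<union> A_k.\<close>
primrec prune_removed :: "nat \<Rightarrow> real \<Rightarrow> real \<Rightarrow> (nat set set \<Rightarrow> bool) \<Rightarrow> nat \<Rightarrow> nat set set" where
  "prune_removed d p \<delta> \<omega> 0 = {}"
| "prune_removed d p \<delta> \<omega> (Suc k) =
     prune_removed d p \<delta> \<omega> k \<union> prune_step d p \<delta> \<omega> k (prune_removed d p \<delta> \<omega> k)"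

text \<open>A_t for t \<ge> 1.\<close>
definition prune_A :: "nat \<Rightarrow> real \<Rightarrow> real \<Rightarrow> (nat set set \<Rightarrow> bool) \<Rightarrow> nat \<Rightarrow> nat set set" where
  "prune_A d p \<delta> \<omega> t = prune_step d p \<delta> \<omega> (t - 1) (prune_removed d p \<delta> \<omega> (t - 1))"

end

theory Submission
  imports Defs
begin


definition sd :: "nat set \<Rightarrow> nat set \<Rightarrow> nat set" where
  "sd a b = (a - b) \<union> (b - a)"

definition flip :: "nat set \<Rightarrow> nat \<Rightarrow> nat set" where
  "flip u i = (if i \<in> u then u - {i} else insert i u)"

lemma sd_flip: "sd u (flip u i) = {i}"
  unfolding sd_def flip_def by auto

lemma sd_comm: "sd a b = sd b a" unfolding sd_def by auto

lemma adj_iff: "cube_adj w u \<longleftrightarrow> (\<exists>i. w = flip u i)"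
proof
  assume "cube_adj w u"
  then obtain i where "sd w u = {i}" unfolding cube_adj_def sd_def[symmetric] by (auto simp: card_1_singleton_iff)
  hence key: "\<And>j. j \<in> w \<longleftrightarrow> (j \<in> u \<longleftrightarrow> j \<noteq> i)"
    unfolding sd_def by (metis DiffD1 DiffD2 DiffI UnCI UnE singletonD singletonI)
  hence "w = flip u i" unfolding flip_def by (auto simp: set_eq_iff key)
  thus "\<exists>i. w = flip u i" by blast
next
  assume "\<exists>i. w = flip u i"
  then obtain i where "w = flip u i" by blast
  hence "sd w u = {i}" using sd_flip sd_comm by metis
  thus "cube_adj w u" unfolding cube_adj_def sd_def[symmetric] by simp
qed

lemma adj_sym: "cube_adj u w = cube_adj w u"
  unfolding cube_adj_def by (simp add: Un_commute)

lemma flip_inj: "inj (flip u)"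
  unfolding inj_def flip_def by (auto split: if_splits)

lemma flip_in_V: "u \<in> cube_V d \<Longrightarrow> flip u i \<in> cube_V d \<longleftrightarrow> i < d"
  unfolding cube_V_def flip_def by auto

lemma nbr_set: "u \<in> cube_V d \<Longrightarrow> {w \<in> cube_V d. cube_adj w u} = flip u ` {..<d}"
  using flip_in_V[of u d] by (auto simp: adj_iff)

lemma card_nbr: "u \<in> cube_V d \<Longrightarrow> card {w \<in> cube_V d. cube_adj w u} = d"
  by (simp add: nbr_set card_image inj_on_subset[OF flip_inj])

lemma sd_flip2: "sd v (flip x i) = flip (sd v x) i"
  unfolding sd_def flip_def by auto

lemma fin_V: "u \<in> cube_V d \<Longrightarrow> finite u"
  unfolding cube_V_def using finite_subset by auto

lemma card_flip_out: "finite A \<Longrightarrow> i \<notin> A \<Longrightarrow> card (flip A i) = card A + 1"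
  unfolding flip_def by simp

lemma card_flip_in: "finite A \<Longrightarrow> i \<in> A \<Longrightarrow> card (flip A i) + 1 = card A"
  unfolding flip_def using card_Suc_Diff1 by fastforce

lemma few_back:
  assumes v: "v \<in> cube_V d" and x: "x \<in> cube_V d"
  shows "card {u \<in> cube_V d. cube_adj u x \<and> card (sd v u) \<noteq> card (sd v x) + 1} \<le> card (sd v x)"
proof -
  have fin: "finite (sd v x)" using fin_V[OF v] fin_V[OF x] unfolding sd_def by auto
  have "{u \<in> cube_V d. cube_adj u x \<and> card (sd v u) \<noteq> card (sd v x) + 1} \<subseteq> flip x ` sd v x"
  proof
    fix u assume u: "u \<in> {u \<in> cube_V d. cube_adj u x \<and> card (sd v u) \<noteq> card (sd v x) + 1}"
    then obtain i where ui: "u = flip x i" by (auto simp: adj_iff)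
    have "i \<in> sd v x"
    proof (rule ccontr)
      assume "i \<notin> sd v x"
      hence "card (sd v u) = card (sd v x) + 1" using ui sd_flip2 card_flip_out[OF fin] by simp
      thus False using u by simp
    qed
    thus "u \<in> flip x ` sd v x" using ui by blast
  qed
  hence "card {u \<in> cube_V d. cube_adj u x \<and> card (sd v u) \<noteq> card (sd v x) + 1} \<le> card (flip x ` sd v x)"
    by (intro card_mono) (use fin in auto)
  also have "\<dots> \<le> card (sd v x)" by (rule card_image_le[OF fin])
  finally show ?thesis .
qed

lemma sphere_nonadj:
  assumes v: "v \<in> cube_V d" and "u \<in> cube_V d" "w \<in> cube_V d"
    and "card (sd v u) = card (sd v w)"
  shows "\<not> cube_adj u w"
proof
  assume "cube_adj u w"
  then obtain i where ui: "u = flip w i" by (auto simp: adj_iff)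
  have fin: "finite (sd v w)" using fin_V[OF v] fin_V[OF assms(3)] unfolding sd_def by auto
  show False
  proof (cases "i \<in> sd v w")
    case True thus False using card_flip_in[OF fin True] assms(4) ui sd_flip2 by simp
  next
    case False thus False using card_flip_out[OF fin False] assms(4) ui sd_flip2 by simp
  qed
qed

lemma card_sphere:
  assumes v: "v \<in> cube_V d"
  shows "card {w \<in> cube_V d. card (sd v w) = m} \<le> d ^ m"
proof -
  have "inj_on (sd v) {w \<in> cube_V d. card (sd v w) = m}"
    by (rule inj_onI) (auto simp: sd_def)
  moreover have "sd v ` {w \<in> cube_V d. card (sd v w) = m} \<subseteq> {B. B \<subseteq> {..<d} \<and> card B = m}"
    using v by (auto simp: sd_def cube_V_def)
  ultimately have "card {w \<in> cube_V d. card (sd v w) = m} \<le> card {B. B \<subseteq> {..<d} \<and> card B = m}"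
  proof (rule card_inj_on_le)
    show "finite {B. B \<subseteq> {..<d} \<and> card B = m}"
      by (rule finite_subset[of _ "Pow {..<d}"]) auto
  qed
  also have "\<dots> = d choose m" using n_subsets[of "{..<d}" m] by simp
  also have "\<dots> \<le> d ^ m"
    by (cases "m \<le> d") (auto intro: binomial_le_pow simp: binomial_eq_0)
  finally show ?thesis .
qed



lemma prune_step_sub: "prune_step d p \<delta> \<omega> k R \<subseteq> cube_V d"
  unfolding prune_step_def by auto

lemma prune_A_sub: "prune_A d p \<delta> \<omega> s \<subseteq> cube_V d"
  unfolding prune_A_def by (rule prune_step_sub)

lemma A_sub_compl: "prune_A d p \<delta> \<omega> (Suc k) \<subseteq> cube_V d - prune_removed d p \<delta> \<omega> k"
  unfolding prune_A_def prune_step_def by auto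

lemma removed_Suc: "prune_removed d p \<delta> \<omega> (Suc k) = prune_removed d p \<delta> \<omega> k \<union> prune_A d p \<delta> \<omega> (Suc k)"
  unfolding prune_A_def by simp

lemma deg_lower:
  assumes "x \<in> cube_V d - prune_removed d p \<delta> \<omega> k" "x \<notin> prune_A d p \<delta> \<omega> (Suc k)"
  shows "real (deg_in d \<omega> (cube_V d - prune_removed d p \<delta> \<omega> k) x) \<ge> (1 - delta_t d \<delta> (Suc k)) * real d * p"
proof (cases k)
  case 0
  thus ?thesis using assms unfolding prune_A_def prune_step_def by auto
next
  case (Suc k')
  thus ?thesis using assms unfolding prune_A_def prune_step_def by auto
qed

lemma drop_count:
  assumes L: "real_of_int \<lfloor>ln (real d)\<rfloor> > 0"
    and x: "x \<in> prune_A d p \<delta> \<omega> (Suc (Suc k))"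
  shows "real (card {u \<in> prune_A d p \<delta> \<omega> (Suc k). cube_adj u x}) > \<delta> * real d * p / real_of_int \<lfloor>ln (real d)\<rfloor>"
proof -
  define R0 where "R0 = prune_removed d p \<delta> \<omega> k"
  define A1 where "A1 = prune_A d p \<delta> \<omega> (Suc k)"
  define R1 where "R1 = prune_removed d p \<delta> \<omega> (Suc k)"
  have R1: "R1 = R0 \<union> A1" unfolding R1_def R0_def A1_def by (rule removed_Suc)
  have A1sub: "A1 \<subseteq> cube_V d - R0" unfolding A1_def R0_def by (rule A_sub_compl)
  have xin: "x \<in> cube_V d - R1" and xlow: "real (deg_in d \<omega> (cube_V d - R1) x) < (1 - delta_t d \<delta> (Suc (Suc k))) * real d * p"
    using x unfolding prune_A_def prune_step_def R1_def by auto
  have "real (deg_in d \<omega> (cube_V d - R0) x) \<ge> (1 - delta_t d \<delta> (Suc k)) * real d * p"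
    using deg_lower[of x d p \<delta> \<omega> k] xin R1 unfolding R0_def A1_def by auto
  moreover have "deg_in d \<omega> (cube_V d - R0) x = deg_in d \<omega> (cube_V d - R1) x + card {u \<in> A1. cube_adj u x \<and> \<omega> {u, x}}"
  proof -
    have "{u \<in> (cube_V d - R0) \<inter> cube_V d. cube_adj u x \<and> \<omega> {u, x}} =
          {u \<in> (cube_V d - R1) \<inter> cube_V d. cube_adj u x \<and> \<omega> {u, x}} \<union> {u \<in> A1. cube_adj u x \<and> \<omega> {u, x}}"
      using R1 A1sub by auto
    moreover have "finite (cube_V d)" unfolding cube_V_def by simp
    ultimately show ?thesis unfolding deg_in_def using R1 A1sub
      by (subst card_Un_disjoint[symmetric]) (auto intro: finite_subset)
  qed
  moreover have "card {u \<in> A1. cube_adj u x \<and> \<omega> {u, x}} \<le> card {u \<in> A1. cube_adj u x}"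
    using A1sub by (intro card_mono) (auto intro: finite_subset simp: cube_V_def)
  moreover have "delta_t d \<delta> (Suc (Suc k)) - delta_t d \<delta> (Suc k) = \<delta> / real_of_int \<lfloor>ln (real d)\<rfloor>"
    unfolding delta_t_def by (simp add: add_divide_distrib[symmetric] algebra_simps)
  ultimately have "real (card {u \<in> A1. cube_adj u x}) > (delta_t d \<delta> (Suc (Suc k)) - delta_t d \<delta> (Suc k)) * real d * p"
    using xlow by (simp add: algebra_simps) 
  thus ?thesis
    unfolding A1_def using \<open>delta_t d \<delta> (Suc (Suc k)) - delta_t d \<delta> (Suc k) = _\<close> by simp
qed



lemma finite_V: "finite (cube_V d)" unfolding cube_V_def by simp

lemma level_step:
  fixes T :: "nat \<Rightarrow> nat set set"
  assumes L: "real_of_int \<lfloor>ln (real d)\<rfloor> > 0"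
    and v: "v \<in> cube_V d"
    and T_def: "\<And>j. T j = {w \<in> cube_V d. card (sd v w) = j \<and> w \<in> prune_A d p \<delta> \<omega> (t - j)}"
    and j: "j + 2 \<le> t"
  shows "(\<delta> * real d * p / real_of_int \<lfloor>ln (real d)\<rfloor> - real j) * real (card (T j))
           \<le> real (j + 1) * real (card (T (j + 1)))"
proof -
  define \<Delta> where "\<Delta> = \<delta> * real d * p / real_of_int \<lfloor>ln (real d)\<rfloor>"
  have finT: "finite (T i)" for i using T_def[of i] finite_V by auto
  have each: "real (card {u \<in> T (j+1). cube_adj u x}) \<ge> \<Delta> - real j" if x: "x \<in> T j" for x
  proof -
    define k where "k = t - j - 2"
    have k: "t - j = Suc (Suc k)" using j unfolding k_def by simp
    have k2: "t - (j+1) = Suc k" using k by simp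
    have xV: "x \<in> cube_V d" and xd: "card (sd v x) = j" and xA: "x \<in> prune_A d p \<delta> \<omega> (Suc (Suc k))"
      using x T_def k by auto
    have dc: "real (card {u \<in> prune_A d p \<delta> \<omega> (Suc k). cube_adj u x}) > \<Delta>"
      using drop_count[OF L xA] unfolding \<Delta>_def .
    have "{u \<in> prune_A d p \<delta> \<omega> (Suc k). cube_adj u x} \<subseteq>
          {u \<in> T (j+1). cube_adj u x} \<union> {u \<in> cube_V d. cube_adj u x \<and> card (sd v u) \<noteq> card (sd v x) + 1}"
      using prune_A_sub[of d p \<delta> \<omega> "Suc k"] T_def[of "j+1"] k2 xd by auto
    hence "card {u \<in> prune_A d p \<delta> \<omega> (Suc k). cube_adj u x} \<le>
          card ({u \<in> T (j+1). cube_adj u x} \<union> {u \<in> cube_V d. cube_adj u x \<and> card (sd v u) \<noteq> card (sd v x) + 1})"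
      by (intro card_mono) (use finT finite_V in auto)
    also have "\<dots> \<le> card {u \<in> T (j+1). cube_adj u x} + card {u \<in> cube_V d. cube_adj u x \<and> card (sd v u) \<noteq> card (sd v x) + 1}"
      by (rule card_Un_le)
    also have "\<dots> \<le> card {u \<in> T (j+1). cube_adj u x} + j"
      using few_back[OF v xV] xd by simp
    finally show ?thesis using dc by linarith
  qed
  have bk: "real (card {x \<in> T j. cube_adj u x}) \<le> real (j + 1)" if uT: "u \<in> T (j+1)" for u
  proof -
    have uV: "u \<in> cube_V d" and ud: "card (sd v u) = j + 1" using uT T_def by auto
    have "{x \<in> T j. cube_adj u x} \<subseteq> {x \<in> cube_V d. cube_adj x u \<and> card (sd v x) \<noteq> card (sd v u) + 1}"
      using T_def[of j] ud adj_sym by auto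
    hence "card {x \<in> T j. cube_adj u x} \<le> card {x \<in> cube_V d. cube_adj x u \<and> card (sd v x) \<noteq> card (sd v u) + 1}"
      by (intro card_mono) (use finite_V in auto)
    also have "\<dots> \<le> j + 1" using few_back[OF v uV] ud by simp
    finally show ?thesis by simp
  qed
  have "(\<Delta> - real j) * real (card (T j)) = (\<Sum>x\<in>T j. \<Delta> - real j)" by simp
  also have "\<dots> \<le> (\<Sum>x\<in>T j. real (card {u \<in> T (j+1). cube_adj u x}))"
    by (intro sum_mono each)
  also have "\<dots> = (\<Sum>x\<in>T j. \<Sum>u\<in>{u. u \<in> T (j+1) \<and> cube_adj u x}. (1::real))" by simp
  also have "\<dots> = (\<Sum>u\<in>T (j+1). \<Sum>x\<in>{x. x \<in> T j \<and> cube_adj u x}. (1::real))"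
    by (rule sum.swap_restrict[OF finT finT])
  also have "\<dots> = (\<Sum>u\<in>T (j+1). real (card {x \<in> T j. cube_adj u x}))" by simp
  also have "\<dots> \<le> (\<Sum>u\<in>T (j+1). real (j+1))" by (intro sum_mono bk)
  also have "\<dots> = real (j + 1) * real (card (T (j + 1)))" by simp
  finally show ?thesis unfolding \<Delta>_def .
qed

lemma level_bound:
  fixes T :: "nat \<Rightarrow> nat set set" and a :: real
  assumes L: "real_of_int \<lfloor>ln (real d)\<rfloor> > 0"
    and v: "v \<in> cube_V d" and vA: "v \<in> prune_A d p \<delta> \<omega> t"
    and T_def: "\<And>j. T j = {w \<in> cube_V d. card (sd v w) = j \<and> w \<in> prune_A d p \<delta> \<omega> (t - j)}"
    and a0: "a \<ge> 0"
    and aD: "\<And>j. j + 2 \<le> t \<Longrightarrow> real (j+1) * a \<le> \<delta> * real d * p / real_of_int \<lfloor>ln (real d)\<rfloor> - real j"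
  shows "j + 1 \<le> t \<Longrightarrow> real (card (T j)) \<ge> a ^ j"
proof (induction j)
  case 0
  have "T 0 = {v}"
  proof -
    have "w = v" if "w \<in> cube_V d" "card (sd v w) = 0" for w
    proof -
      have "finite (sd v w)" using fin_V[OF v] fin_V[OF that(1)] unfolding sd_def by blast
      hence "sd v w = {}" using that(2) by simp
      thus "w = v" unfolding sd_def by blast
    qed
    moreover have "card (sd v v) = 0" unfolding sd_def by simp
    ultimately show ?thesis using T_def[of 0] v vA by auto
  qed
  thus ?case by simp
next
  case (Suc j)
  have IH: "real (card (T j)) \<ge> a ^ j" using Suc by simp
  have st: "(\<delta> * real d * p / real_of_int \<lfloor>ln (real d)\<rfloor> - real j) * real (card (T j))
           \<le> real (j + 1) * real (card (T (j + 1)))"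
    by (rule level_step[OF L v T_def]) (use Suc in simp)
  have "real (j+1) * a ^ (Suc j) = (real (j+1) * a) * a ^ j" by simp
  also have "\<dots> \<le> (\<delta> * real d * p / real_of_int \<lfloor>ln (real d)\<rfloor> - real j) * real (card (T j))"
  proof (rule mult_mono)
    show "real (j+1) * a \<le> \<delta> * real d * p / real_of_int \<lfloor>ln (real d)\<rfloor> - real j"
      using aD[of j] Suc.prems by simp
    show "a ^ j \<le> real (card (T j))" by (rule IH)
    have "0 \<le> real (j+1) * a" using a0 by simp
    thus "0 \<le> \<delta> * real d * p / real_of_int \<lfloor>ln (real d)\<rfloor> - real j"
      using aD[of j] Suc.prems by linarith
    show "0 \<le> a ^ j" using a0 by simp
  qed
  also note st
  finally have "real (j+1) * a ^ (Suc j) \<le> real (j+1) * real (card (T (Suc j)))" by simp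
  thus ?case by (simp del: of_nat_Suc)
qed



lemma exp_quad:
  fixes s :: real assumes "\<bar>s\<bar> \<le> 1" shows "exp s \<le> 1 + s + s^2"
proof (cases "s \<ge> 0")
  case True thus ?thesis using exp_bound[of s] assms by simp
next
  case False
  have "1 - s \<le> exp (-s)" using exp_ge_add_one_self[of "-s"] by simp
  hence "exp s \<le> 1 / (1 - s)" using False by (simp add: exp_minus field_simps)
  also have "\<dots> \<le> 1 + s + s^2"
  proof -
    have "(1 - s) * (1 + s + s^2) = 1 - s^3" by (simp add: algebra_simps power2_eq_square power3_eq_cube)
    moreover have "s^3 \<le> 0" proof -
      have "0 \<le> s * s" by simp
      hence "s * s * s \<le> 0" using False by (simp add: mult_nonneg_nonpos)
      thus ?thesis by (simp add: power3_eq_cube)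
    qed
    ultimately have "1 \<le> (1 - s) * (1 + s + s^2)" by simp
    thus ?thesis using False by (simp add: field_simps)
  qed
  finally show ?thesis .
qed

lemma finite_E: "finite (cube_E d)"
proof -
  have "cube_E d \<subseteq> Pow (cube_V d)" unfolding cube_E_def by auto
  thus ?thesis using finite_V finite_subset by blast
qed

lemma finite_set_Qdp: "finite (set_pmf (Qdp d p))"
proof -
  have "set_pmf (Qdp d p) \<subseteq> {f. \<forall>x. x \<notin> cube_E d \<longrightarrow> f x = False}"
    unfolding Qdp_def by (rule set_Pi_pmf_subset[OF finite_E])
  also have "\<dots> \<subseteq> (\<lambda>S x. x \<in> S) ` Pow (cube_E d)"
  proof
    fix f assume "f \<in> {f. \<forall>x. x \<notin> cube_E d \<longrightarrow> f x = False}"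
    hence "f = (\<lambda>x. x \<in> {x \<in> cube_E d. f x})" by auto
    thus "f \<in> (\<lambda>S x. x \<in> S) ` Pow (cube_E d)" by blast
  qed
  finally show ?thesis using finite_E by (meson finite_Pow_iff finite_imageI finite_subset)
qed

lemma Eu_image:
  assumes u: "u \<in> cube_V d"
  shows "{e \<in> cube_E d. u \<in> e} = (\<lambda>w. {w, u}) ` {w \<in> cube_V d. cube_adj w u}"
  using u unfolding cube_E_def by (auto simp: adj_sym)

lemma adj_neq: "cube_adj w u \<Longrightarrow> w \<noteq> u"
  unfolding cube_adj_def by auto

lemma Eu_inj: "inj_on (\<lambda>w. {w, u}) {w \<in> cube_V d. cube_adj w u}"
  by (rule inj_onI) (auto simp: doubleton_eq_iff dest: adj_neq)

lemma card_Eu: "u \<in> cube_V d \<Longrightarrow> card {e \<in> cube_E d. u \<in> e} = d"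
  by (simp add: Eu_image card_image[OF Eu_inj] card_nbr)

lemma deg_sum:
  assumes u: "u \<in> cube_V d"
  shows "real (deg_in d \<omega> (cube_V d) u) = (\<Sum>e\<in>{e \<in> cube_E d. u \<in> e}. if \<omega> e then 1 else 0)"
proof -
  have "deg_in d \<omega> (cube_V d) u = card ((\<lambda>w. {w, u}) ` {w \<in> cube_V d. cube_adj w u \<and> \<omega> {w, u}})"
    unfolding deg_in_def by (subst card_image) (auto intro: inj_on_subset[OF Eu_inj])
  also have "(\<lambda>w. {w, u}) ` {w \<in> cube_V d. cube_adj w u \<and> \<omega> {w, u}} = {e \<in> {e \<in> cube_E d. u \<in> e}. \<omega> e}"
    using Eu_image[OF u] by auto
  finally show ?thesis
    by (simp add: sum.If_cases finite_E Int_def conj_commute)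
qed

lemma edge_one:
  assumes S: "\<forall>u\<in>S. \<forall>w\<in>S. \<not> cube_adj u w" and e: "e \<in> cube_E d"
  shows "{u \<in> S. u \<in> e} = {} \<or> (\<exists>u. {u \<in> S. u \<in> e} = {u})"
proof -
  obtain a b where ab: "e = {a, b}" "cube_adj a b" using e unfolding cube_E_def by auto
  have "\<not> (a \<in> S \<and> b \<in> S)" using S ab(2) by blast
  thus ?thesis using ab(1) by auto
qed



lemma per_u:
  fixes p \<sigma> \<epsilon> :: real
  assumes p: "0 < p" "p \<le> 1" and sig: "\<sigma> = 1 \<or> \<sigma> = -1" and eps: "0 < \<epsilon>" "\<epsilon> \<le> 1"
  shows "((1 - p) + p * exp (\<epsilon> / 2 * \<sigma>)) ^ d * exp (- (\<epsilon> / 2) * \<sigma> * (real d * p) - \<epsilon> / 2 * \<epsilon> * (real d * p))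
           \<le> exp (- (\<epsilon>^2 * (real d * p) / 4))"
proof -
  define s where "s = \<epsilon> / 2 * \<sigma>"
  have s2: "s^2 = \<epsilon>^2 / 4" using sig unfolding s_def by (auto simp: power2_eq_square)
  have sabs: "\<bar>s\<bar> \<le> 1" using sig eps unfolding s_def by auto
  have m0: "0 \<le> (1 - p) + p * exp s" using p by (simp add: add_nonneg_nonneg)
  have "(1 - p) + p * exp s = 1 + p * (exp s - 1)" by (simp add: algebra_simps)
  also have "\<dots> \<le> exp (p * (exp s - 1))" by (rule exp_ge_add_one_self)
  finally have m1: "(1 - p) + p * exp s \<le> exp (p * (exp s - 1))" .
  have "((1 - p) + p * exp s) ^ d \<le> exp (p * (exp s - 1)) ^ d"
    by (rule power_mono[OF m1 m0])
  also have "\<dots> = exp (real d * (p * (exp s - 1)))" by (simp add: exp_of_nat_mult)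
  also have "\<dots> \<le> exp (real d * (p * (s + s^2)))"
  proof -
    have "exp s - 1 \<le> s + s^2" using exp_quad[OF sabs] by simp
    hence "p * (exp s - 1) \<le> p * (s + s^2)" using p by (intro mult_left_mono) auto
    hence "real d * (p * (exp s - 1)) \<le> real d * (p * (s + s^2))" by (rule mult_left_mono) auto
    thus ?thesis by simp
  qed
  finally have A: "((1 - p) + p * exp s) ^ d \<le> exp (real d * (p * (s + s^2)))" .
  have "((1 - p) + p * exp s) ^ d * exp (- s * (real d * p) - \<epsilon> / 2 * \<epsilon> * (real d * p))
        \<le> exp (real d * (p * (s + s^2))) * exp (- s * (real d * p) - \<epsilon> / 2 * \<epsilon> * (real d * p))"
    by (rule mult_right_mono[OF A]) simp
  also have "\<dots> = exp (real d * p * s^2 - \<epsilon> / 2 * \<epsilon> * (real d * p))"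
    by (simp add: exp_add[symmetric] algebra_simps)
  also have "real d * p * s^2 - \<epsilon> / 2 * \<epsilon> * (real d * p) = - (\<epsilon>^2 * (real d * p) / 4)"
    unfolding s2 by (simp add: algebra_simps power2_eq_square)
  finally show ?thesis unfolding s_def by (simp add: mult.assoc)
qed



lemma chernoff:
  fixes S :: "nat set set" and \<sigma> :: "nat set \<Rightarrow> real" and \<epsilon> :: real
  assumes SV: "S \<subseteq> cube_V d" and nadj: "\<forall>u\<in>S. \<forall>w\<in>S. \<not> cube_adj u w"
    and sig: "\<forall>u\<in>S. \<sigma> u = 1 \<or> \<sigma> u = -1"
    and p: "0 < p" "p \<le> 1" and eps: "0 < \<epsilon>" "\<epsilon> \<le> 1"
  shows "measure_pmf.prob (Qdp d p)
           {\<omega>. \<forall>u\<in>S. \<sigma> u * (real (deg_in d \<omega> (cube_V d) u) - real d * p) \<ge> \<epsilon> * (real d * p)}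
         \<le> exp (- (\<epsilon>^2 * (real d * p) / 4)) ^ card S"
proof -
  define \<mu> where "\<mu> = real d * p"
  define lam where "lam = \<epsilon> / 2"
  define X where "X \<omega> u = real (deg_in d \<omega> (cube_V d) u)" for \<omega> u
  define B where "B = {\<omega>. \<forall>u\<in>S. \<sigma> u * (X \<omega> u - \<mu>) \<ge> \<epsilon> * \<mu>}"
  define g where "g \<omega> = (\<Prod>u\<in>S. exp (lam * \<sigma> u * (X \<omega> u - \<mu>) - lam * \<epsilon> * \<mu>))" for \<omega>
  define m where "m u = (1 - p) + p * exp (lam * \<sigma> u)" for u
  define f where "f e b = (\<Prod>u\<in>{u. u \<in> S \<and> u \<in> e}. exp (lam * \<sigma> u * (if b then 1 else 0)))" for e and b :: bool
  define C where "C = (\<Prod>u\<in>S. exp (- lam * \<sigma> u * \<mu> - lam * \<epsilon> * \<mu>))"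
  have finS: "finite S" using SV finite_V finite_subset by blast
  have lam0: "lam > 0" using eps unfolding lam_def by simp
  have int: "integrable (measure_pmf (Qdp d p)) h" for h :: "_ \<Rightarrow> real"
    by (rule integrable_measure_pmf_finite[OF finite_set_Qdp])
  have step1: "measure_pmf.prob (Qdp d p) B \<le> measure_pmf.expectation (Qdp d p) g"
  proof -
    have "measure_pmf.prob (Qdp d p) B = measure_pmf.expectation (Qdp d p) (indicator B)" by simp
    also have "\<dots> \<le> measure_pmf.expectation (Qdp d p) g"
    proof (rule integral_mono[OF int int])
      fix \<omega>
      show "indicator B \<omega> \<le> g \<omega>"
      proof (cases "\<omega> \<in> B")
        case True
        have "1 \<le> g \<omega>" unfolding g_def
        proof (rule prod_ge_1)
          fix u assume u: "u \<in> S"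
          have "\<epsilon> * \<mu> \<le> \<sigma> u * (X \<omega> u - \<mu>)" using True u unfolding B_def by auto
          hence "lam * (\<epsilon> * \<mu>) \<le> lam * (\<sigma> u * (X \<omega> u - \<mu>))" using lam0 by (intro mult_left_mono) auto
          hence "0 \<le> lam * \<sigma> u * (X \<omega> u - \<mu>) - lam * \<epsilon> * \<mu>" by (simp add: algebra_simps)
          thus "1 \<le> exp (lam * \<sigma> u * (X \<omega> u - \<mu>) - lam * \<epsilon> * \<mu>)" by simp
        qed
        thus ?thesis using True by simp
      next
        case False
        have "0 \<le> g \<omega>" unfolding g_def by (rule prod_nonneg) simp
        thus ?thesis using False by simp
      qed
    qed
    finally show ?thesis .
  qed
  have step2: "g \<omega> = C * (\<Prod>e\<in>cube_E d. f e (\<omega> e))" for \<omega>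
  proof -
    have e1: "exp (lam * \<sigma> u * (X \<omega> u - \<mu>) - lam * \<epsilon> * \<mu>)
           = exp (lam * \<sigma> u * X \<omega> u) * exp (- lam * \<sigma> u * \<mu> - lam * \<epsilon> * \<mu>)" for u
      by (simp add: exp_add[symmetric] algebra_simps)
    have e2: "exp (lam * \<sigma> u * X \<omega> u) = (\<Prod>e\<in>{e. e \<in> cube_E d \<and> u \<in> e}. exp (lam * \<sigma> u * (if \<omega> e then 1 else 0)))"
      if u: "u \<in> S" for u
    proof -
      have "lam * \<sigma> u * X \<omega> u = (\<Sum>e\<in>{e \<in> cube_E d. u \<in> e}. lam * \<sigma> u * (if \<omega> e then 1 else 0))"
        unfolding X_def using deg_sum[of u d \<omega>] u SV by (auto simp: sum_distrib_left)
      thus ?thesis by (simp add: exp_sum finite_E)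
    qed
    have "g \<omega> = (\<Prod>u\<in>S. exp (lam * \<sigma> u * X \<omega> u)) * C"
      unfolding g_def C_def e1 by (rule prod.distrib)
    also have "(\<Prod>u\<in>S. exp (lam * \<sigma> u * X \<omega> u)) =
       (\<Prod>u\<in>S. \<Prod>e\<in>{e. e \<in> cube_E d \<and> u \<in> e}. exp (lam * \<sigma> u * (if \<omega> e then 1 else 0)))"
      by (rule prod.cong[OF refl e2])
    also have "\<dots> = (\<Prod>e\<in>cube_E d. \<Prod>u\<in>{u. u \<in> S \<and> u \<in> e}. exp (lam * \<sigma> u * (if \<omega> e then 1 else 0)))"
      by (rule prod.swap_restrict[OF finS finite_E])
    also have "\<dots> = (\<Prod>e\<in>cube_E d. f e (\<omega> e))" unfolding f_def by simp
    finally show ?thesis by simp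
  qed
  have step3: "measure_pmf.expectation (Qdp d p) (\<lambda>\<omega>. \<Prod>e\<in>cube_E d. f e (\<omega> e))
      = (\<Prod>e\<in>cube_E d. measure_pmf.expectation (bernoulli_pmf p) (f e))"
    unfolding Qdp_def
  proof (rule expectation_prod_Pi_pmf[OF finite_E])
    fix e show "integrable (measure_pmf (bernoulli_pmf p)) (f e)"
      by (rule integrable_measure_pmf_finite) (rule finite_subset[of _ UNIV], auto)
  next
    fix e b show "0 \<le> f e b" unfolding f_def by (rule prod_nonneg) simp
  qed
  have step4: "measure_pmf.expectation (bernoulli_pmf p) (f e) = (\<Prod>u\<in>{u. u \<in> S \<and> u \<in> e}. m u)"
    if e: "e \<in> cube_E d" for e
  proof -
    have "measure_pmf.expectation (bernoulli_pmf p) (f e) = f e True * p + f e False * (1 - p)"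
      using p by simp
    moreover have "{u. u \<in> S \<and> u \<in> e} = {} \<or> (\<exists>u. {u. u \<in> S \<and> u \<in> e} = {u})"
      using edge_one[OF nadj e] by simp
    ultimately show ?thesis
    proof (elim disjE exE)
      assume "measure_pmf.expectation (bernoulli_pmf p) (f e) = f e True * p + f e False * (1 - p)"
        and em: "{u. u \<in> S \<and> u \<in> e} = {}"
      have "f e True = 1" "f e False = 1" unfolding f_def em by simp_all
      thus ?thesis unfolding em using \<open>measure_pmf.expectation (bernoulli_pmf p) (f e) = _\<close> by simp
    next
      fix u
      assume "measure_pmf.expectation (bernoulli_pmf p) (f e) = f e True * p + f e False * (1 - p)"
        and "{u. u \<in> S \<and> u \<in> e} = {u}"
      thus ?thesis unfolding f_def m_def by (simp add: algebra_simps)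
    qed
  qed
  have step5: "(\<Prod>e\<in>cube_E d. measure_pmf.expectation (bernoulli_pmf p) (f e)) = (\<Prod>u\<in>S. m u ^ d)"
  proof -
    have "(\<Prod>e\<in>cube_E d. measure_pmf.expectation (bernoulli_pmf p) (f e))
          = (\<Prod>e\<in>cube_E d. \<Prod>u\<in>{u. u \<in> S \<and> u \<in> e}. m u)"
      by (rule prod.cong[OF refl step4])
    also have "\<dots> = (\<Prod>u\<in>S. \<Prod>e\<in>{e. e \<in> cube_E d \<and> u \<in> e}. m u)"
      by (rule prod.swap_restrict[OF finS finite_E, symmetric])
    also have "\<dots> = (\<Prod>u\<in>S. m u ^ d)"
    proof (rule prod.cong[OF refl])
      fix u assume "u \<in> S"
      hence "card {e \<in> cube_E d. u \<in> e} = d" using SV card_Eu by auto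
      thus "(\<Prod>e\<in>{e. e \<in> cube_E d \<and> u \<in> e}. m u) = m u ^ d" by simp
    qed
    finally show ?thesis .
  qed
  have "measure_pmf.prob (Qdp d p) B \<le> measure_pmf.expectation (Qdp d p) g" by (rule step1)
  also have "measure_pmf.expectation (Qdp d p) g = C * (\<Prod>u\<in>S. m u ^ d)"
    unfolding step2 by (simp add: step3 step5)
  also have "C * (\<Prod>u\<in>S. m u ^ d) = (\<Prod>u\<in>S. m u ^ d * exp (- lam * \<sigma> u * \<mu> - lam * \<epsilon> * \<mu>))"
    unfolding C_def by (simp add: prod.distrib mult.commute)
  also have "\<dots> \<le> (\<Prod>u\<in>S. exp (- (\<epsilon>^2 * (real d * p) / 4)))"
  proof (rule prod_mono)
    fix u assume u: "u \<in> S"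
    have "0 \<le> m u" unfolding m_def using p by (simp add: add_nonneg_nonneg)
    moreover have "m u ^ d * exp (- lam * \<sigma> u * \<mu> - lam * \<epsilon> * \<mu>) \<le> exp (- (\<epsilon>^2 * (real d * p) / 4))"
      using per_u[OF p _ eps, of "\<sigma> u" d] sig u unfolding m_def lam_def \<mu>_def by simp
    ultimately show "0 \<le> m u ^ d * exp (- lam * \<sigma> u * \<mu> - lam * \<epsilon> * \<mu>) \<and>
          m u ^ d * exp (- lam * \<sigma> u * \<mu> - lam * \<epsilon> * \<mu>) \<le> exp (- (\<epsilon>^2 * (real d * p) / 4))"
      by simp
  qed
  also have "\<dots> = exp (- (\<epsilon>^2 * (real d * p) / 4)) ^ card S" by simp
  finally show ?thesis unfolding B_def X_def \<mu>_def .
qed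



lemma A1_char:
  "prune_A d p \<delta> \<omega> 1 = {v \<in> cube_V d. real (deg_in d \<omega> (cube_V d) v) \<notin>
             {(1 - delta_t d \<delta> 1) * real d * p .. (1 + delta_t d \<delta> 1) * real d * p}}"
  unfolding prune_A_def prune_step_def by simp

theorem mainTheorem6:
  fixes d t :: nat and p \<delta> :: real and v :: "nat set"
  assumes "d \<ge> 3"
    and "0 < p" and "p \<le> 1" and "real d * p \<ge> (ln (real d)) ^ 5"
    and "0 < \<delta>" and "\<delta> < 1" and "\<delta>^2 * real d * p \<ge> 12 * (ln (real d)) ^ 4"
    and "v \<in> cube_V d"
    and "2 \<le> t" and "t \<le> nat \<lfloor>ln (real d)\<rfloor>"
  shows "measure_pmf.prob (Qdp d p) {\<omega>. v \<in> prune_A d p \<delta> \<omega> t}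
           \<le> exp (- (((\<delta> * real d * p) / (2 * real t * ln (real d))) ^ (t - 1)))"
proof -
  note d3 = assms(1) and p0 = assms(2) and p1 = assms(3) and dl0 = assms(5) and dl1 = assms(6)
    and big = assms(7) and v = assms(8) and t2 = assms(9) and tL = assms(10)
  define ld where "ld = ln (real d)"
  define L where "L = real_of_int \<lfloor>ln (real d)\<rfloor>"
  define a where "a = (\<delta> * real d * p) / (2 * real t * ln (real d))"
  define \<mu> where "\<mu> = real d * p"
  define \<epsilon> where "\<epsilon> = delta_t d \<delta> 1"
  have fl2: "\<lfloor>ln (real d)\<rfloor> \<ge> 2" using t2 tL by linarith
  have L2: "L \<ge> 2" unfolding L_def using fl2 by simp
  have Lld: "L \<le> ld" unfolding L_def ld_def by simp
  have ld2: "ld \<ge> 2" using L2 Lld by simp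
  have tL': "real t \<le> L" unfolding L_def using tL fl2 by linarith
  have tld: "real t \<le> ld" using tL' Lld by simp
  have mu0: "\<mu> > 0" unfolding \<mu>_def using d3 p0 by simp
  have eps_def': "\<epsilon> = \<delta> / L" unfolding \<epsilon>_def delta_t_def L_def by simp
  have eps0: "0 < \<epsilon>" "\<epsilon> \<le> 1" unfolding eps_def' using dl0 dl1 L2 by (auto simp: field_simps)
  have big': "\<delta>^2 * \<mu> \<ge> 12 * ld^4" using big unfolding \<mu>_def ld_def by (simp add: mult.assoc)
  have dmu: "\<delta> * \<mu> \<ge> \<delta>^2 * \<mu>"
  proof -
    have "\<delta>^2 \<le> \<delta>" using dl0 dl1 by (simp add: power2_eq_square mult_left_le)
    thus ?thesis using mu0 by (intro mult_right_mono) auto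
  qed
  have ld4: "ld^2 \<le> ld^4"
  proof -
    have "1 * 1 \<le> ld * ld" by (rule mult_mono) (use ld2 in auto)
    hence "1 \<le> ld^2" by (simp add: power2_eq_square)
    hence "ld^2 * 1 \<le> ld^2 * ld^2" by (intro mult_left_mono) auto
    thus ?thesis by (simp add: power4_eq_xxxx power2_eq_square mult.assoc)
  qed
  have tl_le: "2 * real t * ld \<le> 2 * ld^2" using tld ld2 by (simp add: power2_eq_square)
  have a1: "a \<ge> 1"
  proof -
    have "0 \<le> ld^4" using ld2 by simp
    hence "2 * real t * ld \<le> \<delta> * \<mu>" using tl_le ld4 big' dmu by linarith
    moreover have "2 * real t * ld > 0" using t2 ld2 by simp
    ultimately show ?thesis unfolding a_def \<mu>_def ld_def by (simp add: field_simps mult.assoc)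
  qed
  have DL: "\<delta> * real d * p / L \<ge> 2 * real t * a"
  proof -
    have "2 * real t * a = \<delta> * \<mu> / ld" unfolding a_def \<mu>_def ld_def using t2 ld2 ld_def
      by (simp add: field_simps)
    also have "\<dots> \<le> \<delta> * \<mu> / L" using L2 Lld dl0 mu0 by (intro divide_left_mono) auto
    finally show ?thesis unfolding \<mu>_def by (simp add: mult.assoc)
  qed
  have aD: "real (j+1) * a \<le> \<delta> * real d * p / real_of_int \<lfloor>ln (real d)\<rfloor> - real j" if j: "j + 2 \<le> t" for j
  proof -
    have "real j * 1 \<le> real j * a" by (rule mult_left_mono) (use a1 in auto)
    hence "real j \<le> real j * a" by simp
    moreover have "real (j+1) * a + real j * a \<le> 2 * real t * a"
    proof -
      have "real (j+1) * a + real j * a = real (2*j+1) * a" by (simp add: algebra_simps)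
      also have "\<dots> \<le> real (2*t) * a" by (rule mult_right_mono) (use j a1 in auto)
      finally show ?thesis by simp
    qed
    ultimately show ?thesis using DL unfolding L_def by linarith
  qed
  define Sph where "Sph = {w \<in> cube_V d. card (sd v w) = t - 1}"
  define n where "n = nat \<lceil>a ^ (t - 1)\<rceil>"
  define Ss where "Ss = {S. S \<subseteq> Sph \<and> card S = n}"
  define I where "I = Sigma Ss (\<lambda>S. S \<rightarrow>\<^sub>E ({1, -1} :: real set))"
  define Bev where "Bev i = {\<omega>. \<forall>u\<in>fst i. snd i u * (real (deg_in d \<omega> (cube_V d) u) - real d * p) \<ge> \<epsilon> * (real d * p)}" for i
  define q where "q = exp (- (\<epsilon>^2 * (real d * p) / 4))"
  have finSph: "finite Sph" unfolding Sph_def using finite_V by simp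
  have finSs: "finite Ss" unfolding Ss_def using finSph by (simp add: finite_subset[of _ "Pow Sph"] subset_eq)
  have finI: "finite I" unfolding I_def using finSs
    by (intro finite_SigmaI finite_PiE) (auto simp: Ss_def intro: finite_subset[OF _ finSph])
  have cover: "{\<omega>. v \<in> prune_A d p \<delta> \<omega> t} \<subseteq> (\<Union>i\<in>I. Bev i)"
  proof
    fix \<omega> assume "\<omega> \<in> {\<omega>. v \<in> prune_A d p \<delta> \<omega> t}"
    hence vA: "v \<in> prune_A d p \<delta> \<omega> t" by simp
    define T where "T j = {w \<in> cube_V d. card (sd v w) = j \<and> w \<in> prune_A d p \<delta> \<omega> (t - j)}" for j
    have "real (card (T (t-1))) \<ge> a ^ (t-1)"
      by (rule level_bound[of d v p \<delta> \<omega> t T a]) (use L2 v vA T_def a1 aD t2 in \<open>auto simp: L_def\<close>)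
    hence "n \<le> card (T (t-1))" unfolding n_def by (simp add: nat_le_iff ceiling_le)
    then obtain S where S: "S \<subseteq> T (t-1)" "card S = n" by (meson obtain_subset_with_card_n)
    have TA: "T (t-1) \<subseteq> Sph \<inter> prune_A d p \<delta> \<omega> 1" unfolding T_def Sph_def using t2 by auto
    define \<sigma> where "\<sigma> = restrict (\<lambda>u. if real (deg_in d \<omega> (cube_V d) u) \<ge> real d * p then 1 else (-1::real)) S"
    have "(S, \<sigma>) \<in> I" unfolding I_def Ss_def \<sigma>_def using S TA by auto
    moreover have "\<omega> \<in> Bev (S, \<sigma>)" unfolding Bev_def
    proof (simp, intro ballI)
      fix u assume u: "u \<in> S"
      hence "u \<in> prune_A d p \<delta> \<omega> 1" using S TA by auto
      hence nin: "real (deg_in d \<omega> (cube_V d) u) \<notin> {(1 - \<epsilon>) * real d * p .. (1 + \<epsilon>) * real d * p}"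
        unfolding A1_char \<epsilon>_def by simp
      show "\<epsilon> * (real d * p) \<le> \<sigma> u * (real (deg_in d \<omega> (cube_V d) u) - real d * p)"
      proof (cases "real (deg_in d \<omega> (cube_V d) u) \<ge> real d * p")
        case True
        hence "real (deg_in d \<omega> (cube_V d) u) > (1 + \<epsilon>) * real d * p" using nin eps0 mu0 unfolding \<mu>_def
          by (auto simp: algebra_simps)
        thus ?thesis using True u unfolding \<sigma>_def by (simp add: algebra_simps)
      next
        case False
        hence "real (deg_in d \<omega> (cube_V d) u) < (1 - \<epsilon>) * real d * p" using nin eps0 mu0 unfolding \<mu>_def
          by (auto simp: algebra_simps)
        thus ?thesis using False u unfolding \<sigma>_def by (simp add: algebra_simps)
      qed
    qed
    ultimately show "\<omega> \<in> (\<Union>i\<in>I. Bev i)" by blast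
  qed
  have each: "measure_pmf.prob (Qdp d p) (Bev i) \<le> q ^ n" if i: "i \<in> I" for i
  proof -
    obtain S \<sigma> where i': "i = (S, \<sigma>)" by (cases i)
    have S: "S \<subseteq> Sph" "card S = n" and sig: "\<sigma> \<in> S \<rightarrow>\<^sub>E {1, -1}" using i i' unfolding I_def Ss_def by auto
    have SV: "S \<subseteq> cube_V d" using S unfolding Sph_def by auto
    have nadj: "\<forall>u\<in>S. \<forall>w\<in>S. \<not> cube_adj u w"
      using S sphere_nonadj[OF v] unfolding Sph_def by (metis (mono_tags, lifting) mem_Collect_eq subsetD)
    have sig': "\<forall>u\<in>S. \<sigma> u = 1 \<or> \<sigma> u = -1" using sig by auto
    show ?thesis unfolding i' Bev_def q_def using chernoff[OF SV nadj sig' p0 p1 eps0] S by simp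
  qed
  have "measure_pmf.prob (Qdp d p) {\<omega>. v \<in> prune_A d p \<delta> \<omega> t} \<le> measure_pmf.prob (Qdp d p) (\<Union>i\<in>I. Bev i)"
    by (rule measure_pmf.finite_measure_mono[OF cover]) simp
  also have "\<dots> \<le> (\<Sum>i\<in>I. measure_pmf.prob (Qdp d p) (Bev i))"
    by (rule measure_pmf.finite_measure_subadditive_finite[OF finI]) simp
  also have "\<dots> \<le> (\<Sum>i\<in>I. q ^ n)" by (rule sum_mono[OF each])
  also have "\<dots> = real (card I) * q ^ n" by simp
  also have "card I = card Ss * 2 ^ n"
  proof -
    have "card I = (\<Sum>S\<in>Ss. card (S \<rightarrow>\<^sub>E ({1, -1} :: real set)))"
      unfolding I_def using finSs
      by (intro card_SigmaI) (auto simp: Ss_def intro!: finite_PiE intro: finite_subset[OF _ finSph])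
    also have "\<dots> = (\<Sum>S\<in>Ss. 2 ^ n)"
    proof (rule sum.cong[OF refl])
      fix S assume "S \<in> Ss"
      hence "finite S" "card S = n" unfolding Ss_def using finite_subset[OF _ finSph] by auto
      thus "card (S \<rightarrow>\<^sub>E ({1, -1} :: real set)) = 2 ^ n" by (simp add: card_PiE numeral_2_eq_2)
    qed
    finally show ?thesis by simp
  qed
  also have "card Ss \<le> (d ^ (t-1)) ^ n"
  proof -
    have "card Ss = card Sph choose n" unfolding Ss_def using n_subsets[OF finSph] by simp
    also have "\<dots> \<le> card Sph ^ n" by (cases "n \<le> card Sph") (auto intro: binomial_le_pow simp: binomial_eq_0)
    also have "\<dots> \<le> (d ^ (t-1)) ^ n" unfolding Sph_def by (intro power_mono card_sphere[OF v]) simp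
    finally show ?thesis .
  qed
  hence cs: "real (card Ss) \<le> (real d ^ (t-1)) ^ n" by (metis of_nat_le_iff of_nat_power)
  have "real (card Ss * 2 ^ n) * q ^ n = real (card Ss) * (2 ^ n * q ^ n)" by simp
  also have "\<dots> \<le> (real d ^ (t-1)) ^ n * (2 ^ n * q ^ n)"
    by (rule mult_right_mono[OF cs]) (simp add: q_def)
  also have "\<dots> = (real d ^ (t-1) * 2 * q) ^ n" by (simp add: power_mult_distrib)
  also have "\<dots> \<le> exp (-1) ^ n"
  proof (rule power_mono)
    show "0 \<le> real d ^ (t-1) * 2 * q" unfolding q_def by simp
    have dpow: "real d ^ (t-1) \<le> exp (ld * ld)"
    proof -
      have "real d ^ (t-1) = exp (real (t-1) * ld)" unfolding ld_def using d3
        by (simp add: exp_of_nat_mult)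
      also have "real (t-1) * ld \<le> ld * ld" using tld ld2 by (intro mult_right_mono) auto
      finally show ?thesis by simp
    qed
    have two: "(2::real) \<le> exp 1" using exp_ge_add_one_self[of 1] by simp
    have qb: "q \<le> exp (- 3 * (ld * ld))"
    proof -
      have "\<epsilon>^2 * \<mu> = \<delta>^2 * \<mu> / L^2" unfolding eps_def' by (simp add: power_divide)
      also have "\<dots> \<ge> 12 * ld^4 / ld^2"
        using big' L2 Lld mu0 by (intro frac_le) (auto intro: power_mono)
      finally have "\<epsilon>^2 * \<mu> \<ge> 12 * (ld * ld)" using ld2 by (simp add: power4_eq_xxxx power2_eq_square)
      thus ?thesis unfolding q_def \<mu>_def by simp
    qed
    have "real d ^ (t-1) * 2 * q \<le> exp (ld * ld) * exp 1 * exp (- 3 * (ld * ld))"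
      using dpow two qb by (intro mult_mono) (auto simp: q_def)
    also have "\<dots> = exp (1 - 2 * (ld * ld))" by (simp add: exp_add[symmetric])
    also have "\<dots> \<le> exp (-1)"
    proof -
      have "1 * 1 \<le> ld * ld" by (rule mult_mono) (use ld2 in auto)
      thus ?thesis by simp
    qed
    finally show "real d ^ (t-1) * 2 * q \<le> exp (-1)" .
  qed
  also have "\<dots> = exp (- real n)" by (simp add: exp_of_nat_mult[symmetric])
  also have "\<dots> \<le> exp (- (a ^ (t - 1)))" unfolding n_def using real_nat_ceiling_ge[of "a ^ (t - 1)"] by simp
  finally show ?thesis unfolding a_def .
qed


end
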